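(* Let $\mathcal H$ be a connected graded Hopf algebra over a field $\mathbb K$ of characteristic zero, $\alpha:\mathcal H_1\to\mathbb K$ a nonzero linear map and $q=q_\alpha$ the associated inverse-factorial character. Then for all $h,k\in\mathbb K$ and every homogeneous $x\in\mathcal H$, $$q(x)\,(h+k)^{|x|}=\sum_{(x)}q(x_1)\,q(x_2)\,h^{|x_1|}k^{|x_2|},$$ where $\Delta(x)=\sum_{(x)}x_1\otimes x_2$ is written with homogeneous $x_1,x_2$.
   Context: A connected graded Hopf algebra is $\mathcal H=\bigoplus_{n\ge0}\mathcal H_n$ with $\mathcal H_0=\mathbb K\mathbf 1$, product and coproduct $\Delta$ respecting the grading; $|x|$ is the degree of a homogeneous $x$. The reduced coproduct is $\Delta'(x)=\Delta(x)-x\otimes\mathbf 1-\mathbf 1\otimes x=\sum'_{(x)}x'\otimes x''$ (homogeneous components). The inverse-factorial character $q_\alpha$ is the linear form on $\mathcal H$ determined by $q_\alpha(\mathbf 1)=1$, $q_\alpha|_{\mathcal H_1}=\alpha$, and for homogeneous $x$ with $|x|\ge2$: $q_\alpha(x)=\frac{1}{2^{|x|}-2}\sum'_{(x)}q_\alpha(x')q_\alpha(x'')$. *)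

theory Defs
  imports Main "HOL-Library.Groups_Big_Fun"
begin

text \<open>
A connected graded Hopf algebra over a field 'k is encoded by a homogeneous basis,
indexed by the type 'b, with
  deg b      : degree of the basis element e_b,
  one        : the basis element equal to the unit 1,
  mult x y z : coefficient of e_z in e_x * e_y,
  cop x y z  : coefficient of e_y (x) e_z in Delta(e_x).
Elements of H are finitely supported coefficient functions 'b => 'k.
The counit of a connected graded bialgebra is the projection onto H_0 = K 1,
i.e. eps(e_b) = 1 if b = one and 0 otherwise.
\<close>

definition conn_graded_hopf ::
  "('b \<Rightarrow> nat) \<Rightarrow> 'b \<Rightarrow> ('b \<Rightarrow> 'b \<Rightarrow> 'b \<Rightarrow> 'k::field) \<Rightarrow> ('b \<Rightarrow> 'b \<Rightarrow> 'b \<Rightarrow> 'k) \<Rightarrow> bool" where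
  "conn_graded_hopf deg one mult cop \<longleftrightarrow>
     \<comment> \<open>connectedness: H_0 is spanned by the unit\<close>
     (\<forall>b. deg b = 0 \<longleftrightarrow> b = one) \<and>
     \<comment> \<open>products and coproducts are finite sums\<close>
     (\<forall>x y. finite {z. mult x y z \<noteq> 0}) \<and>
     (\<forall>x. finite {(y, z). cop x y z \<noteq> 0}) \<and>
     \<comment> \<open>grading\<close>
     (\<forall>x y z. mult x y z \<noteq> 0 \<longrightarrow> deg z = deg x + deg y) \<and>
     (\<forall>x y z. cop x y z \<noteq> 0 \<longrightarrow> deg y + deg z = deg x) \<and>
     \<comment> \<open>unit\<close>
     (\<forall>x z. mult one x z = (if z = x then 1 else 0)) \<and>
     (\<forall>x z. mult x one z = (if z = x then 1 else 0)) \<and>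
     \<comment> \<open>associativity\<close>
     (\<forall>x y z v. Sum_any (\<lambda>w. mult x y w * mult w z v) = Sum_any (\<lambda>w. mult y z w * mult x w v)) \<and>
     \<comment> \<open>coassociativity\<close>
     (\<forall>x y1 y2 y3. Sum_any (\<lambda>w. cop x w y3 * cop w y1 y2) = Sum_any (\<lambda>w. cop x y1 w * cop w y2 y3)) \<and>
     \<comment> \<open>counit laws\<close>
     (\<forall>x z. cop x one z = (if z = x then 1 else 0)) \<and>
     (\<forall>x y. cop x y one = (if y = x then 1 else 0)) \<and>
     \<comment> \<open>the counit is an algebra morphism\<close>
     (\<forall>x y. mult x y one = (if x = one \<and> y = one then 1 else 0)) \<and>
     \<comment> \<open>the coproduct is an algebra morphism\<close>
     (\<forall>a b. cop one a b = (if a = one \<and> b = one then 1 else 0)) \<and>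
     (\<forall>x y a b. Sum_any (\<lambda>w. mult x y w * cop w a b) =
        Sum_any (\<lambda>(a1, b1, a2, b2). cop x a1 b1 * cop y a2 b2 * mult a1 a2 a * mult b1 b2 b)) \<and>
     \<comment> \<open>existence of an antipode\<close>
     (\<exists>S :: 'b \<Rightarrow> 'b \<Rightarrow> 'k. (\<forall>x. finite {y. S x y \<noteq> 0}) \<and>
        (\<forall>x v. Sum_any (\<lambda>(y, z, w). cop x y z * S y w * mult w z v)
               = (if x = one \<and> v = one then 1 else 0)) \<and>
        (\<forall>x v. Sum_any (\<lambda>(y, z, w). cop x y z * S z w * mult y w v)
               = (if x = one \<and> v = one then 1 else 0)))"

definition red_cop :: "('b \<Rightarrow> 'b \<Rightarrow> 'b \<Rightarrow> 'k::field) \<Rightarrow> 'b \<Rightarrow> 'b \<Rightarrow> 'b \<Rightarrow> 'b \<Rightarrow> 'k" where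
  "red_cop cop one b y z =
     cop b y z - (if y = b \<and> z = one then 1 else 0) - (if y = one \<and> z = b then 1 else 0)"

definition is_inv_fact_char ::
  "('b \<Rightarrow> nat) \<Rightarrow> 'b \<Rightarrow> ('b \<Rightarrow> 'b \<Rightarrow> 'b \<Rightarrow> 'k::field) \<Rightarrow> ('b \<Rightarrow> 'k) \<Rightarrow> ('b \<Rightarrow> 'k) \<Rightarrow> bool" where
  "is_inv_fact_char deg one cop \<alpha> q \<longleftrightarrow>
     q one = 1 \<and>
     (\<forall>b. deg b = 1 \<longrightarrow> q b = \<alpha> b) \<and>
     (\<forall>b. 2 \<le> deg b \<longrightarrow>
        q b = (1 / (2 ^ deg b - 2)) * Sum_any (\<lambda>(y, z). red_cop cop one b y z * q y * q z))"

definition inv_fact_char ::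
  "('b \<Rightarrow> nat) \<Rightarrow> 'b \<Rightarrow> ('b \<Rightarrow> 'b \<Rightarrow> 'b \<Rightarrow> 'k::field) \<Rightarrow> ('b \<Rightarrow> 'k) \<Rightarrow> ('b \<Rightarrow> 'k)" where
  "inv_fact_char deg one cop \<alpha> = (THE q. is_inv_fact_char deg one cop \<alpha> q)"

definition lin_form :: "('b \<Rightarrow> 'k::field) \<Rightarrow> ('b \<Rightarrow> 'k) \<Rightarrow> 'k" where
  "lin_form q x = Sum_any (\<lambda>b. x b * q b)"

definition cop_elem :: "('b \<Rightarrow> 'b \<Rightarrow> 'b \<Rightarrow> 'k::field) \<Rightarrow> ('b \<Rightarrow> 'k) \<Rightarrow> 'b \<Rightarrow> 'b \<Rightarrow> 'k" where
  "cop_elem cop x y z = Sum_any (\<lambda>b. x b * cop b y z)"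

end

theory Submission
  imports Defs
begin

lemma Sum_any_pairs:
  fixes F :: "'a \<Rightarrow> 'a \<Rightarrow> 'k::comm_monoid_add"
  assumes "finite A" "\<And>y z. F y z \<noteq> 0 \<Longrightarrow> y \<in> A \<and> z \<in> A"
  shows "Sum_any (\<lambda>(y, z). F y z) = (\<Sum>y\<in>A. \<Sum>z\<in>A. F y z)"
proof -
  have "Sum_any (\<lambda>(y, z). F y z) = sum (\<lambda>(y, z). F y z) (A \<times> A)"
    by (rule Sum_any.expand_superset) (use assms in auto)
  also have "\<dots> = (\<Sum>y\<in>A. \<Sum>z\<in>A. F y z)"
    by (simp add: sum.cartesian_product)
  finally show ?thesis .
qed

lemma Sum_any_single:
  fixes F :: "'a \<Rightarrow> 'k::comm_monoid_add"
  assumes "finite A" "\<And>y. F y \<noteq> 0 \<Longrightarrow> y \<in> A"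
  shows "Sum_any F = (\<Sum>y\<in>A. F y)"
  by (rule Sum_any.expand_superset) (use assms in auto)

lemma sum4_reorder:
  "(\<Sum>w\<in>A. \<Sum>z\<in>A. \<Sum>y1\<in>A. \<Sum>y2\<in>A. (T w z y1 y2::'k::comm_ring)) = (\<Sum>y1\<in>A. \<Sum>y2\<in>A. \<Sum>z\<in>A. \<Sum>w\<in>A. T w z y1 y2)"
  apply (subst sum.swap)
  apply (subst (2) sum.swap)
  apply (subst (3) sum.swap)
  apply (subst (1) sum.swap)
  apply (subst (2) sum.swap)
  apply (subst (3) sum.swap)
  apply (subst (1) sum.swap)
  apply (rule refl)
  done

lemma sum3_rot:
  "(\<Sum>a\<in>A. \<Sum>b\<in>A. \<Sum>c\<in>A. (T a b c::'k::comm_ring)) = (\<Sum>b\<in>A. \<Sum>c\<in>A. \<Sum>a\<in>A. T a b c)"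
  apply (subst (2) sum.swap)
  apply (subst (1) sum.swap)
  apply (rule refl)
  done

lemma sum4_swap2:
  "(\<Sum>a\<in>A. \<Sum>b\<in>B. \<Sum>c\<in>C. \<Sum>d\<in>D. (F a b c d::'k::comm_ring)) = (\<Sum>c\<in>C. \<Sum>d\<in>D. \<Sum>a\<in>A. \<Sum>b\<in>B. F a b c d)"
proof -
  have "(\<Sum>a\<in>A. \<Sum>b\<in>B. \<Sum>c\<in>C. \<Sum>d\<in>D. F a b c d) = (\<Sum>a\<in>A. \<Sum>c\<in>C. \<Sum>b\<in>B. \<Sum>d\<in>D. F a b c d)"
    by (rule sum.cong[OF refl], rule sum.swap)
  also have "\<dots> = (\<Sum>a\<in>A. \<Sum>c\<in>C. \<Sum>d\<in>D. \<Sum>b\<in>B. F a b c d)"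
    by (rule sum.cong[OF refl], rule sum.cong[OF refl], rule sum.swap)
  also have "\<dots> = (\<Sum>c\<in>C. \<Sum>a\<in>A. \<Sum>d\<in>D. \<Sum>b\<in>B. F a b c d)"
    by (rule sum.swap)
  also have "\<dots> = (\<Sum>c\<in>C. \<Sum>d\<in>D. \<Sum>a\<in>A. \<Sum>b\<in>B. F a b c d)"
    by (rule sum.cong[OF refl], rule sum.swap)
  finally show ?thesis .
qed

lemma sum3_rot':
  "(\<Sum>a\<in>A. \<Sum>b\<in>B. \<Sum>c\<in>C. (F a b c::'k::comm_ring)) = (\<Sum>b\<in>B. \<Sum>c\<in>C. \<Sum>a\<in>A. F a b c)"
proof -
  have "(\<Sum>a\<in>A. \<Sum>b\<in>B. \<Sum>c\<in>C. F a b c) = (\<Sum>b\<in>B. \<Sum>a\<in>A. \<Sum>c\<in>C. F a b c)"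
    by (rule sum.swap)
  also have "\<dots> = (\<Sum>b\<in>B. \<Sum>c\<in>C. \<Sum>a\<in>A. F a b c)"
    by (rule sum.cong[OF refl], rule sum.swap)
  finally show ?thesis .
qed

lemma sum2_delta:
  assumes "finite A" "a \<in> A" "c \<in> A"
  shows "(\<Sum>y\<in>A. \<Sum>z\<in>A. (if y = a \<and> z = c then v else 0)) = (v::'k::comm_ring)"
proof -
  have "(\<Sum>y\<in>A. \<Sum>z\<in>A. (if y = a \<and> z = c then v else 0)) = (\<Sum>y\<in>A. if y = a then v else 0)"
    by (rule sum.cong[OF refl]) (use assms in \<open>simp add: sum.delta\<close>)
  also have "\<dots> = v" using assms by (simp add: sum.delta)
  finally show ?thesis .
qed

locale cgh =
  fixes deg :: "'b \<Rightarrow> nat" and one :: 'b and cop :: "'b \<Rightarrow> 'b \<Rightarrow> 'b \<Rightarrow> 'k::field_char_0"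
  assumes deg0: "\<And>b. deg b = 0 \<longleftrightarrow> b = one"
    and fin: "\<And>x. finite {(y, z). cop x y z \<noteq> 0}"
    and grad: "\<And>x y z. cop x y z \<noteq> 0 \<Longrightarrow> deg y + deg z = deg x"
    and coassoc: "\<And>x y1 y2 y3. Sum_any (\<lambda>w. cop x w y3 * cop w y1 y2) = Sum_any (\<lambda>w. cop x y1 w * cop w y2 y3)"
    and cu1: "\<And>x z. cop x one z = (if z = x then 1 else 0)"
    and cu2: "\<And>x y. cop x y one = (if y = x then 1 else 0)"
begin

definition S :: "'b \<Rightarrow> 'b set" where
  "S b = fst ` {(y, z). cop b y z \<noteq> 0} \<union> snd ` {(y, z). cop b y z \<noteq> 0}"

lemma S_fin: "finite (S b)"
  using fin[of b] by (simp add: S_def)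

lemma S_mem: "cop b y z \<noteq> 0 \<Longrightarrow> y \<in> S b \<and> z \<in> S b"
  unfolding S_def by (auto intro: rev_image_eqI)

lemma one_S: "one \<in> S b" and b_S: "b \<in> S b"
  using S_mem[of b b one] by (auto simp: cu2)

definition conv :: "('b \<Rightarrow> 'k) \<Rightarrow> ('b \<Rightarrow> 'k) \<Rightarrow> 'b \<Rightarrow> 'k" where
  "conv f g b = Sum_any (\<lambda>(y, z). cop b y z * f y * g z)"

lemma conv_A:
  assumes "finite A" "S b \<subseteq> A"
  shows "conv f g b = (\<Sum>y\<in>A. \<Sum>z\<in>A. cop b y z * f y * g z)"
  unfolding conv_def
  by (rule Sum_any_pairs) (use assms S_mem in auto)

lemma conv_S: "conv f g b = (\<Sum>y\<in>S b. \<Sum>z\<in>S b. cop b y z * f y * g z)"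
  by (rule conv_A) (auto simp: S_fin)

definition eps :: "'b \<Rightarrow> 'k" where "eps b = (if b = one then 1 else 0)"

lemma conv_eps_left: "conv eps g b = g b"
proof -
  have "conv eps g b = (\<Sum>y\<in>S b. \<Sum>z\<in>S b. (if y = one then cop b one z * g z else 0))"
    unfolding conv_S eps_def by (intro sum.cong refl) auto
  also have "\<dots> = (\<Sum>y\<in>S b. if y = one then (\<Sum>z\<in>S b. cop b one z * g z) else 0)"
    by (intro sum.cong refl) auto
  also have "\<dots> = (\<Sum>z\<in>S b. cop b one z * g z)"
    using one_S[of b] S_fin[of b] by (simp add: sum.delta)
  also have "\<dots> = (\<Sum>z\<in>S b. if z = b then g z else 0)"
    by (intro sum.cong refl) (auto simp: cu1)
  also have "\<dots> = g b"
    using b_S[of b] S_fin[of b] by (simp add: sum.delta)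
  finally show ?thesis .
qed

lemma conv_eps_right: "conv f eps b = f b"
proof -
  have "conv f eps b = (\<Sum>y\<in>S b. \<Sum>z\<in>S b. (if z = one then cop b y one * f y else 0))"
    unfolding conv_S eps_def by (intro sum.cong refl) auto
  also have "\<dots> = (\<Sum>y\<in>S b. cop b y one * f y)"
    using one_S[of b] S_fin[of b] by (simp add: sum.delta)
  also have "\<dots> = (\<Sum>y\<in>S b. if y = b then f y else 0)"
    by (intro sum.cong refl) (auto simp: cu2)
  also have "\<dots> = f b"
    using b_S[of b] S_fin[of b] by (simp add: sum.delta)
  finally show ?thesis .
qed

lemma conv_assoc: "conv (conv f g) h b = conv f (conv g h) b"
proof -
  define A where "A = S b \<union> \<Union> (S ` S b)"
  have finA: "finite A" unfolding A_def using S_fin by auto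
  have SbA: "S b \<subseteq> A" unfolding A_def by auto
  have SwA: "S w \<subseteq> A" if "w \<in> S b" for w unfolding A_def using that by auto
  have L1: "conv (conv f g) h b = (\<Sum>w\<in>A. \<Sum>z\<in>A. \<Sum>y1\<in>A. \<Sum>y2\<in>A.
      f y1 * g y2 * h z * (cop b w z * cop w y1 y2))"
  proof -
    have "conv (conv f g) h b = (\<Sum>w\<in>A. \<Sum>z\<in>A. cop b w z * conv f g w * h z)"
      by (rule conv_A[OF finA SbA])
    also have "\<dots> = (\<Sum>w\<in>A. \<Sum>z\<in>A. cop b w z * (\<Sum>y1\<in>A. \<Sum>y2\<in>A. cop w y1 y2 * f y1 * g y2) * h z)"
    proof (intro sum.cong refl)
      fix w z assume "w \<in> A" "z \<in> A"
      show "cop b w z * conv f g w * h z = cop b w z * (\<Sum>y1\<in>A. \<Sum>y2\<in>A. cop w y1 y2 * f y1 * g y2) * h z"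
      proof (cases "cop b w z = 0")
        case False
        then have "w \<in> S b" using S_mem by blast
        then show ?thesis using conv_A[OF finA SwA] by simp
      qed simp
    qed
    also have "\<dots> = (\<Sum>w\<in>A. \<Sum>z\<in>A. \<Sum>y1\<in>A. \<Sum>y2\<in>A.
      f y1 * g y2 * h z * (cop b w z * cop w y1 y2))"
      by (simp add: sum_distrib_left sum_distrib_right algebra_simps)
    finally show ?thesis .
  qed
  have L2: "conv f (conv g h) b = (\<Sum>y1\<in>A. \<Sum>w\<in>A. \<Sum>y2\<in>A. \<Sum>z\<in>A.
      f y1 * g y2 * h z * (cop b y1 w * cop w y2 z))"
  proof -
    have "conv f (conv g h) b = (\<Sum>y1\<in>A. \<Sum>w\<in>A. cop b y1 w * f y1 * conv g h w)"
      by (rule conv_A[OF finA SbA])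
    also have "\<dots> = (\<Sum>y1\<in>A. \<Sum>w\<in>A. cop b y1 w * f y1 * (\<Sum>y2\<in>A. \<Sum>z\<in>A. cop w y2 z * g y2 * h z))"
    proof (intro sum.cong refl)
      fix w y1 assume "w \<in> A" "y1 \<in> A"
      show "cop b y1 w * f y1 * conv g h w = cop b y1 w * f y1 * (\<Sum>y2\<in>A. \<Sum>z\<in>A. cop w y2 z * g y2 * h z)"
      proof (cases "cop b y1 w = 0")
        case False
        then have "w \<in> S b" using S_mem by blast
        then show ?thesis using conv_A[OF finA SwA] by simp
      qed simp
    qed
    also have "\<dots> = (\<Sum>y1\<in>A. \<Sum>w\<in>A. \<Sum>y2\<in>A. \<Sum>z\<in>A.
      f y1 * g y2 * h z * (cop b y1 w * cop w y2 z))"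
      by (simp add: sum_distrib_left sum_distrib_right algebra_simps)
    finally show ?thesis .
  qed
  have CA: "(\<Sum>w\<in>A. cop b w z * cop w y1 y2) = (\<Sum>w\<in>A. cop b y1 w * cop w y2 z)" for y1 y2 z
  proof -
    have "(\<Sum>w\<in>A. cop b w z * cop w y1 y2) = Sum_any (\<lambda>w. cop b w z * cop w y1 y2)"
      by (rule Sum_any_single[symmetric, OF finA]) (use S_mem SbA in auto)
    also have "\<dots> = Sum_any (\<lambda>w. cop b y1 w * cop w y2 z)" by (rule coassoc)
    also have "\<dots> = (\<Sum>w\<in>A. cop b y1 w * cop w y2 z)"
      by (rule Sum_any_single[OF finA]) (use S_mem SbA in auto)
    finally show ?thesis .
  qed
  have "conv (conv f g) h b = (\<Sum>y1\<in>A. \<Sum>y2\<in>A. \<Sum>z\<in>A. \<Sum>w\<in>A.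
      f y1 * g y2 * h z * (cop b w z * cop w y1 y2))"
    unfolding L1 by (rule sum4_reorder)
  also have "\<dots> = (\<Sum>y1\<in>A. \<Sum>y2\<in>A. \<Sum>z\<in>A. f y1 * g y2 * h z * (\<Sum>w\<in>A. cop b w z * cop w y1 y2))"
    by (simp add: sum_distrib_left)
  also have "\<dots> = (\<Sum>y1\<in>A. \<Sum>y2\<in>A. \<Sum>z\<in>A. f y1 * g y2 * h z * (\<Sum>w\<in>A. cop b y1 w * cop w y2 z))"
    by (simp add: CA)
  also have "\<dots> = (\<Sum>y1\<in>A. \<Sum>y2\<in>A. \<Sum>z\<in>A. \<Sum>w\<in>A. f y1 * g y2 * h z * (cop b y1 w * cop w y2 z))"
    by (simp add: sum_distrib_left)
  also have "\<dots> = conv f (conv g h) b"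
    unfolding L2
  proof (rule sum.cong[OF refl])
    fix y1 assume "y1 \<in> A"
    show "(\<Sum>y2\<in>A. \<Sum>z\<in>A. \<Sum>w\<in>A. f y1 * g y2 * h z * (cop b y1 w * cop w y2 z)) =
      (\<Sum>w\<in>A. \<Sum>y2\<in>A. \<Sum>z\<in>A. f y1 * g y2 * h z * (cop b y1 w * cop w y2 z))"
      using sum3_rot[of "\<lambda>w y2 z. f y1 * g y2 * h z * (cop b y1 w * cop w y2 z)" A] by simp
  qed
  finally show ?thesis .
qed

definition Za :: "('b \<Rightarrow> 'k) \<Rightarrow> 'b \<Rightarrow> 'k" where
  "Za \<alpha> z = (if deg z = 1 then \<alpha> z else 0)"

primrec P :: "('b \<Rightarrow> 'k) \<Rightarrow> nat \<Rightarrow> 'b \<Rightarrow> 'k" where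
  "P \<alpha> 0 = eps"
| "P \<alpha> (Suc j) = conv (P \<alpha> j) (Za \<alpha>)"

lemma P_deg: "P \<alpha> j b \<noteq> 0 \<Longrightarrow> deg b = j"
proof (induction j arbitrary: b)
  case 0
  then show ?case by (auto simp: eps_def deg0 split: if_splits)
next
  case (Suc j)
  then have "conv (P \<alpha> j) (Za \<alpha>) b \<noteq> 0" by simp
  then obtain yz where "(\<lambda>(y, z). cop b y z * P \<alpha> j y * Za \<alpha> z) yz \<noteq> 0"
    unfolding conv_def by (rule Sum_any.not_neutral_obtains_not_neutral)
  then obtain y z where "cop b y z \<noteq> 0" "P \<alpha> j y \<noteq> 0" "Za \<alpha> z \<noteq> 0"
    by (cases yz) auto
  then show ?case using Suc.IH grad by (fastforce simp: Za_def split: if_splits)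
qed

lemma P_add: "P \<alpha> (i + j) b = conv (P \<alpha> i) (P \<alpha> j) b"
proof (induction j arbitrary: b)
  case 0
  then show ?case by (simp add: conv_eps_right)
next
  case (Suc j)
  have e: "P \<alpha> (i + j) = conv (P \<alpha> i) (P \<alpha> j)" using Suc.IH by (rule ext)
  have "P \<alpha> (i + Suc j) b = conv (conv (P \<alpha> i) (P \<alpha> j)) (Za \<alpha>) b" by (simp add: e)
  also have "\<dots> = conv (P \<alpha> i) (conv (P \<alpha> j) (Za \<alpha>)) b" by (rule conv_assoc)
  finally show ?case by simp
qed

definition Q :: "('b \<Rightarrow> 'k) \<Rightarrow> 'b \<Rightarrow> 'k" where
  "Q \<alpha> b = P \<alpha> (deg b) b / fact (deg b)"

lemma Q_sum:
  assumes "deg y \<le> N"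
  shows "Q \<alpha> y * c ^ deg y = (\<Sum>i\<le>N. P \<alpha> i y * c ^ i / fact i)"
proof -
  have "(\<Sum>i\<le>N. P \<alpha> i y * c ^ i / fact i) = (\<Sum>i\<le>N. if i = deg y then P \<alpha> i y * c ^ i / fact i else 0)"
    by (intro sum.cong refl) (use P_deg in fastforce)
  also have "\<dots> = Q \<alpha> y * c ^ deg y" using assms by (simp add: Q_def)
  finally show ?thesis by simp
qed

lemma main_basis:
  assumes "deg b = n"
  shows "Sum_any (\<lambda>(y, z). cop b y z * Q \<alpha> y * Q \<alpha> z * h ^ deg y * k ^ deg z) = Q \<alpha> b * (h + k) ^ n"
proof -
  define A where "A = S b"
  have finA: "finite A" unfolding A_def by (rule S_fin)
  define X where "X = (\<lambda>y z i j. cop b y z * P \<alpha> i y * P \<alpha> j z * (h ^ i / fact i * (k ^ j / fact j)))"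
  have "Sum_any (\<lambda>(y, z). cop b y z * Q \<alpha> y * Q \<alpha> z * h ^ deg y * k ^ deg z)
      = (\<Sum>y\<in>A. \<Sum>z\<in>A. cop b y z * Q \<alpha> y * Q \<alpha> z * h ^ deg y * k ^ deg z)"
    by (rule Sum_any_pairs[OF finA]) (use S_mem A_def in fastforce)
  also have "\<dots> = (\<Sum>y\<in>A. \<Sum>z\<in>A. cop b y z * (\<Sum>i\<le>n. P \<alpha> i y * h ^ i / fact i) * (\<Sum>j\<le>n. P \<alpha> j z * k ^ j / fact j))"
  proof (intro sum.cong refl)
    fix y z
    show "cop b y z * Q \<alpha> y * Q \<alpha> z * h ^ deg y * k ^ deg z =
      cop b y z * (\<Sum>i\<le>n. P \<alpha> i y * h ^ i / fact i) * (\<Sum>j\<le>n. P \<alpha> j z * k ^ j / fact j)"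
    proof (cases "cop b y z = 0")
      case False
      then have "deg y \<le> n" "deg z \<le> n" using grad[OF False] assms by auto
      have "cop b y z * Q \<alpha> y * Q \<alpha> z * h ^ deg y * k ^ deg z =
        cop b y z * (Q \<alpha> y * h ^ deg y) * (Q \<alpha> z * k ^ deg z)" by (simp add: mult_ac)
      also have "\<dots> = cop b y z * (\<Sum>i\<le>n. P \<alpha> i y * h ^ i / fact i) * (\<Sum>j\<le>n. P \<alpha> j z * k ^ j / fact j)"
        using Q_sum[OF \<open>deg y \<le> n\<close>, of \<alpha> h] Q_sum[OF \<open>deg z \<le> n\<close>, of \<alpha> k] by simp
      finally show ?thesis .
    qed simp
  qed
  also have "\<dots> = (\<Sum>y\<in>A. \<Sum>z\<in>A. \<Sum>i\<le>n. \<Sum>j\<le>n. X y z i j)"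
  proof (intro sum.cong refl)
    fix y z
    have "cop b y z * (\<Sum>i\<le>n. P \<alpha> i y * h ^ i / fact i) * (\<Sum>j\<le>n. P \<alpha> j z * k ^ j / fact j)
      = cop b y z * (\<Sum>i\<le>n. \<Sum>j\<le>n. (P \<alpha> i y * h ^ i / fact i) * (P \<alpha> j z * k ^ j / fact j))"
      by (simp add: sum_product)
    also have "\<dots> = (\<Sum>i\<le>n. \<Sum>j\<le>n. X y z i j)"
      by (simp add: sum_distrib_left X_def mult_ac)
    finally show "cop b y z * (\<Sum>i\<le>n. P \<alpha> i y * h ^ i / fact i) * (\<Sum>j\<le>n. P \<alpha> j z * k ^ j / fact j)
      = (\<Sum>i\<le>n. \<Sum>j\<le>n. X y z i j)" .
  qed
  also have "\<dots> = (\<Sum>i\<le>n. \<Sum>j\<le>n. \<Sum>y\<in>A. \<Sum>z\<in>A. X y z i j)"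
    by (rule sum4_swap2)
  also have "\<dots> = (\<Sum>i\<le>n. \<Sum>j\<le>n. (h ^ i / fact i * (k ^ j / fact j)) * P \<alpha> (i + j) b)"
    by (simp add: X_def P_add conv_S A_def sum_distrib_left sum_distrib_right mult_ac)
  also have "\<dots> = (\<Sum>i\<le>n. \<Sum>j\<le>n. if j = n - i then (h ^ i / fact i * (k ^ j / fact j)) * P \<alpha> n b else 0)"
    by (intro sum.cong refl) (use P_deg assms in fastforce)
  also have "\<dots> = (\<Sum>i\<le>n. (h ^ i / fact i * (k ^ (n - i) / fact (n - i))) * P \<alpha> n b)"
    by (intro sum.cong refl) simp
  also have "\<dots> = Q \<alpha> b * (h + k) ^ n"
  proof -
    have "Q \<alpha> b * (h + k) ^ n = (\<Sum>i\<le>n. P \<alpha> n b / fact n * (of_nat (n choose i) * h ^ i * k ^ (n - i)))"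
      by (simp add: Q_def assms binomial_ring sum_distrib_left)
    also have "\<dots> = (\<Sum>i\<le>n. (h ^ i / fact i * (k ^ (n - i) / fact (n - i))) * P \<alpha> n b)"
      by (intro sum.cong refl) (simp add: binomial_fact field_simps)
    finally show ?thesis by simp
  qed
  finally show ?thesis .
qed

lemma Q_char: "is_inv_fact_char deg one cop \<alpha> (Q \<alpha>)"
  unfolding is_inv_fact_char_def
proof (intro conjI allI impI)
  have d1: "deg one = 0" using deg0 by simp
  show q1: "Q \<alpha> one = 1" by (simp add: Q_def d1 eps_def)
  show "Q \<alpha> b = \<alpha> b" if "deg b = 1"for b
  proof -
    have "P \<alpha> (Suc 0) b = Za \<alpha> b" by (simp only: P.simps conv_eps_left)
    then show ?thesis using that by (simp add: Q_def Za_def)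
  qed
  fix b assume n2: "2 \<le> deg b"
  define n where "n = deg b"
  have bone: "b \<noteq> one" using n2 deg0[of one] by auto
  define A where "A = S b"
  have finA: "finite A" unfolding A_def by (rule S_fin)
  have bA: "b \<in> A" and oA: "one \<in> A" unfolding A_def by (rule b_S, rule one_S)
  have full: "(\<Sum>y\<in>A. \<Sum>z\<in>A. cop b y z * Q \<alpha> y * Q \<alpha> z) = Q \<alpha> b * 2 ^ n"
  proof -
    have "Sum_any (\<lambda>(y, z). cop b y z * Q \<alpha> y * Q \<alpha> z * 1 ^ deg y * 1 ^ deg z) = Q \<alpha> b * (1 + 1) ^ n"
      by (rule main_basis) (simp add: n_def)
    moreover have "Sum_any (\<lambda>(y, z). cop b y z * Q \<alpha> y * Q \<alpha> z * 1 ^ deg y * 1 ^ deg z)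
       = (\<Sum>y\<in>A. \<Sum>z\<in>A. cop b y z * Q \<alpha> y * Q \<alpha> z * 1 ^ deg y * 1 ^ deg z)"
      by (rule Sum_any_pairs[OF finA]) (use S_mem A_def in fastforce)
    ultimately show ?thesis by simp
  qed
  have "Sum_any (\<lambda>(y, z). red_cop cop one b y z * Q \<alpha> y * Q \<alpha> z)
     = (\<Sum>y\<in>A. \<Sum>z\<in>A. red_cop cop one b y z * Q \<alpha> y * Q \<alpha> z)"
  proof (rule Sum_any_pairs[OF finA])
    fix y z assume nz: "red_cop cop one b y z * Q \<alpha> y * Q \<alpha> z \<noteq> 0"
    show "y \<in> A \<and> z \<in> A"
    proof (cases "cop b y z = 0")
      case True
      then have "red_cop cop one b y z \<noteq> 0" using nz by auto
      then have "(y = b \<and> z = one) \<or> (y = one \<and> z = b)" using True unfolding red_cop_def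
        by (auto split: if_splits)
      then show ?thesis using bA oA by blast
    next
      case False
      then show ?thesis using S_mem A_def by blast
    qed
  qed
  also have "\<dots> = (\<Sum>y\<in>A. \<Sum>z\<in>A. cop b y z * Q \<alpha> y * Q \<alpha> z
      - (if y = b \<and> z = one then Q \<alpha> b else 0) - (if y = one \<and> z = b then Q \<alpha> b else 0))"
  proof (intro sum.cong refl)
    fix y z
    show "red_cop cop one b y z * Q \<alpha> y * Q \<alpha> z = cop b y z * Q \<alpha> y * Q \<alpha> z
      - (if y = b \<and> z = one then Q \<alpha> b else 0) - (if y = one \<and> z = b then Q \<alpha> b else 0)"
    proof (cases "y = b \<and> z = one")
      case True
      then have "y = b" "z = one" by auto
      then show ?thesis using bone unfolding red_cop_def by (simp add: q1 left_diff_distrib)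
    next
      case F1: False
      show ?thesis
      proof (cases "y = one \<and> z = b")
        case True
        then have "y = one" "z = b" by auto
        then show ?thesis using bone unfolding red_cop_def by (simp add: q1 left_diff_distrib)
      next
        case False
        then show ?thesis unfolding red_cop_def if_not_P[OF F1] if_not_P[OF False] by simp
      qed
    qed
  qed
  also have "\<dots> = Q \<alpha> b * 2 ^ n - Q \<alpha> b - Q \<alpha> b"
    by (simp add: sum_subtractf full sum2_delta[OF finA bA oA] sum2_delta[OF finA oA bA])
  finally have red: "Sum_any (\<lambda>(y, z). red_cop cop one b y z * Q \<alpha> y * Q \<alpha> z) = ((2::'k) ^ n - 2) * Q \<alpha> b"
    by (simp add: algebra_simps)
  have "(2::nat) ^ 2 \<le> 2 ^ n" using n2 n_def by (intro power_increasing) auto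
  then have "(2::nat) ^ n \<noteq> 2" by auto
  then have "(of_nat (2 ^ n) :: 'k) \<noteq> of_nat 2" by (metis of_nat_eq_iff)
  then have nz: "(2::'k) ^ n - 2 \<noteq> 0" by simp
  show "Q \<alpha> b = 1 / (2 ^ deg b - 2) * Sum_any (\<lambda>(y, z). red_cop cop one b y z * Q \<alpha> y * Q \<alpha> z)"
    unfolding red n_def[symmetric] using nz by simp
qed

lemma red_deg:
  assumes "red_cop cop one b y z \<noteq> 0" "b \<noteq> one"
  shows "deg y < deg b \<and> deg z < deg b"
proof -
  have c: "cop b y z \<noteq> 0"
  proof
    assume "cop b y z = 0"
    then show False using assms by (auto simp: red_cop_def cu1 cu2 split: if_splits)
  qed
  have "y \<noteq> one"
  proof
    assume "y = one"
    then show False using assms by (auto simp: red_cop_def cu1 split: if_splits)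
  qed
  moreover have "z \<noteq> one"
  proof
    assume "z = one"
    then show False using assms by (auto simp: red_cop_def cu2 split: if_splits)
  qed
  ultimately show ?thesis using grad[OF c] deg0[of y] deg0[of z] by auto
qed

lemma char_unique:
  assumes A1: "is_inv_fact_char deg one cop \<alpha> q1" and A2: "is_inv_fact_char deg one cop \<alpha> q2"
  shows "q1 b = q2 b"
proof (induction "deg b" arbitrary: b rule: less_induct)
  case less
  have o1: "q1 one = 1" and o2: "q2 one = 1" using A1 A2 unfolding is_inv_fact_char_def by blast+
  have a1: "deg c = 1 \<Longrightarrow> q1 c = \<alpha> c" and a2: "deg c = 1 \<Longrightarrow> q2 c = \<alpha> c" for c
    using A1 A2 unfolding is_inv_fact_char_def by blast+
  have r1: "2 \<le> deg c \<Longrightarrow> q1 c = (1 / (2 ^ deg c - 2)) * Sum_any (\<lambda>(y, z). red_cop cop one c y z * q1 y * q1 z)"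
   and r2: "2 \<le> deg c \<Longrightarrow> q2 c = (1 / (2 ^ deg c - 2)) * Sum_any (\<lambda>(y, z). red_cop cop one c y z * q2 y * q2 z)" for c
    using A1 A2 unfolding is_inv_fact_char_def by blast+
  consider "deg b = 0" | "deg b = 1" | "2 \<le> deg b" by linarith
  then show ?case
  proof cases
    case 1
    then have "b = one" using deg0 by blast
    then show ?thesis using o1 o2 by simp
  next
    case 2
    then show ?thesis using a1 a2 by simp
  next
    case 3
    have bone: "b \<noteq> one" using 3 deg0[of one] by auto
    have e: "(\<lambda>(y, z). red_cop cop one b y z * q1 y * q1 z) = (\<lambda>(y, z). red_cop cop one b y z * q2 y * q2 z)"
    proof (intro ext, clarify)
      fix y z
      show "red_cop cop one b y z * q1 y * q1 z = red_cop cop one b y z * q2 y * q2 z"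
      proof (cases "red_cop cop one b y z = 0")
        case False
        from red_deg[OF False bone] have "q1 y = q2 y" "q1 z = q2 z" using less by blast+
        then show ?thesis by simp
      qed simp
    qed
    show ?thesis using r1[OF 3] r2[OF 3] e by simp
  qed
qed

lemma inv_fact_char_eq: "inv_fact_char deg one cop \<alpha> = Q \<alpha>"
  unfolding inv_fact_char_def
proof (rule the_equality)
  show "is_inv_fact_char deg one cop \<alpha> (Q \<alpha>)" by (rule Q_char)
  fix q assume "is_inv_fact_char deg one cop \<alpha> q"
  then show "q = Q \<alpha>" using Q_char by (intro ext char_unique)
qed

end

theorem mainTheorem2:
  fixes deg :: "'b \<Rightarrow> nat" and one :: 'b
    and mult cop :: "'b \<Rightarrow> 'b \<Rightarrow> 'b \<Rightarrow> 'k::field_char_0"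
    and \<alpha> :: "'b \<Rightarrow> 'k" and h k :: 'k and x :: "'b \<Rightarrow> 'k" and n :: nat
  assumes "conn_graded_hopf deg one mult cop"
    and "\<exists>b. deg b = 1 \<and> \<alpha> b \<noteq> 0"
    and "finite {b. x b \<noteq> 0}"
    and "\<forall>b. x b \<noteq> 0 \<longrightarrow> deg b = n"
  shows "lin_form (inv_fact_char deg one cop \<alpha>) x * (h + k) ^ n =
     Sum_any (\<lambda>(y, z). cop_elem cop x y z
        * inv_fact_char deg one cop \<alpha> y * inv_fact_char deg one cop \<alpha> z
        * h ^ deg y * k ^ deg z)"
proof -
  interpret cgh deg one cop
    by (insert assms(1), unfold conn_graded_hopf_def cgh_def, elim conjE, intro conjI, assumption+)
  define B where "B = {b. x b \<noteq> 0}"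
  have finB: "finite B" using assms(3) B_def by simp
  define A where "A = \<Union> (S ` B)"
  have finA: "finite A" unfolding A_def using finB S_fin by auto
  have SA: "S b \<subseteq> A" if "b \<in> B" for b using that A_def by auto
  define T where "T = (\<lambda>y z. Q \<alpha> y * Q \<alpha> z * h ^ deg y * k ^ deg z)"
  have "lin_form (Q \<alpha>) x * (h + k) ^ n = (\<Sum>b\<in>B. x b * Q \<alpha> b) * (h + k) ^ n"
    unfolding lin_form_def by (subst Sum_any_single[OF finB]) (auto simp: B_def)
  also have "\<dots> = (\<Sum>b\<in>B. x b * (Q \<alpha> b * (h + k) ^ n))"
    by (simp add: sum_distrib_right mult.assoc)
  also have "\<dots> = (\<Sum>b\<in>B. x b * (\<Sum>y\<in>A. \<Sum>z\<in>A. cop b y z * T y z))"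
  proof (rule sum.cong[OF refl])
    fix b assume bB: "b \<in> B"
    then have "deg b = n" using assms(4) B_def by auto
    then have "Q \<alpha> b * (h + k) ^ n = Sum_any (\<lambda>(y, z). cop b y z * Q \<alpha> y * Q \<alpha> z * h ^ deg y * k ^ deg z)"
      by (rule main_basis[symmetric])
    also have "\<dots> = (\<Sum>y\<in>A. \<Sum>z\<in>A. cop b y z * Q \<alpha> y * Q \<alpha> z * h ^ deg y * k ^ deg z)"
      by (rule Sum_any_pairs[OF finA]) (use S_mem SA[OF bB] in fastforce)
    finally show "x b * (Q \<alpha> b * (h + k) ^ n) = x b * (\<Sum>y\<in>A. \<Sum>z\<in>A. cop b y z * T y z)"
      by (simp add: T_def mult.assoc)
  qed
  also have "\<dots> = (\<Sum>b\<in>B. \<Sum>y\<in>A. \<Sum>z\<in>A. x b * cop b y z * T y z)"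
    by (simp add: sum_distrib_left mult.assoc)
  also have "\<dots> = (\<Sum>y\<in>A. \<Sum>z\<in>A. \<Sum>b\<in>B. x b * cop b y z * T y z)"
    by (rule sum3_rot')
  also have "\<dots> = (\<Sum>y\<in>A. \<Sum>z\<in>A. cop_elem cop x y z * T y z)"
  proof (intro sum.cong refl)
    fix y z
    have "cop_elem cop x y z = (\<Sum>b\<in>B. x b * cop b y z)"
      unfolding cop_elem_def by (rule Sum_any_single[OF finB]) (auto simp: B_def)
    then show "(\<Sum>b\<in>B. x b * cop b y z * T y z) = cop_elem cop x y z * T y z"
      by (simp add: sum_distrib_right)
  qed
  also have "\<dots> = (\<Sum>y\<in>A. \<Sum>z\<in>A. cop_elem cop x y z * Q \<alpha> y * Q \<alpha> z * h ^ deg y * k ^ deg z)"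
    by (simp add: T_def mult.assoc)
  also have "\<dots> = Sum_any (\<lambda>(y, z). cop_elem cop x y z * Q \<alpha> y * Q \<alpha> z * h ^ deg y * k ^ deg z)"
  proof (rule Sum_any_pairs[OF finA, symmetric])
    fix y z assume "cop_elem cop x y z * Q \<alpha> y * Q \<alpha> z * h ^ deg y * k ^ deg z \<noteq> 0"
    then have "cop_elem cop x y z \<noteq> 0" by auto
    then obtain b where "x b * cop b y z \<noteq> 0"
      unfolding cop_elem_def by (rule Sum_any.not_neutral_obtains_not_neutral)
    then have "b \<in> B" "cop b y z \<noteq> 0" by (auto simp: B_def)
    then show "y \<in> A \<and> z \<in> A" using S_mem SA by blast
  qed
  finally show ?thesis by (simp add: inv_fact_char_eq)
qed

end
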